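(* Let $G$ be a factor-critical graph. Then $G$ is equimatchable if and only if there is no independent set $I$ with $3$ vertices such that $G\setminus I$ has a perfect matching.
   Context: All graphs are finite and simple. A graph is equimatchable if all its maximal matchings have the same cardinality. A graph $G$ is factor-critical if $G-v$ has a perfect matching for every $v\in V(G)$. For $I\subseteq V(G)$, $G\setminus I$ is the subgraph induced by $V(G)\setminus I$. *)

theory Defs
  imports Main
begin

definition graph :: "'a set \<Rightarrow> 'a set set \<Rightarrow> bool" where
  "graph V E \<longleftrightarrow> finite V \<and> (\<forall>e\<in>E. \<exists>u v. e = {u, v} \<and> u \<noteq> v \<and> u \<in> V \<and> v \<in> V)"

definition matching :: "'a set set \<Rightarrow> 'a set set \<Rightarrow> bool" where
  "matching E M \<longleftrightarrow> M \<subseteq> E \<and> (\<forall>e1\<in>M. \<forall>e2\<in>M. e1 \<noteq> e2 \<longrightarrow> e1 \<inter> e2 = {})"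

definition maximal_matching :: "'a set set \<Rightarrow> 'a set set \<Rightarrow> bool" where
  "maximal_matching E M \<longleftrightarrow> matching E M \<and> (\<forall>M'. matching E M' \<and> M \<subseteq> M' \<longrightarrow> M' = M)"

definition equimatchable :: "'a set set \<Rightarrow> bool" where
  "equimatchable E \<longleftrightarrow>
     (\<forall>M1 M2. maximal_matching E M1 \<and> maximal_matching E M2 \<longrightarrow> card M1 = card M2)"

definition induced_edges :: "'a set set \<Rightarrow> 'a set \<Rightarrow> 'a set set" where
  "induced_edges E S = {e \<in> E. e \<subseteq> S}"

definition perfect_matching :: "'a set \<Rightarrow> 'a set set \<Rightarrow> 'a set set \<Rightarrow> bool" where
  "perfect_matching V E M \<longleftrightarrow> matching E M \<and> \<Union>M = V"

definition has_perfect_matching :: "'a set \<Rightarrow> 'a set set \<Rightarrow> bool" where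
  "has_perfect_matching V E \<longleftrightarrow> (\<exists>M. perfect_matching V E M)"

definition factor_critical :: "'a set \<Rightarrow> 'a set set \<Rightarrow> bool" where
  "factor_critical V E \<longleftrightarrow>
     (\<forall>v\<in>V. has_perfect_matching (V - {v}) (induced_edges E (V - {v})))"

definition independent_set :: "'a set \<Rightarrow> 'a set set \<Rightarrow> 'a set \<Rightarrow> bool" where
  "independent_set V E I \<longleftrightarrow> I \<subseteq> V \<and> (\<forall>u\<in>I. \<forall>v\<in>I. {u, v} \<notin> E)"

end

theory Submission
  imports Defs
begin

lemma graph_edge:
  assumes "graph V E" "e \<in> E"
  obtains u v where "e = {u, v}" "u \<noteq> v" "u \<in> V" "v \<in> V"
  using assms unfolding graph_def by meson

lemma graph_edge_sub: "graph V E \<Longrightarrow> e \<in> E \<Longrightarrow> e \<subseteq> V"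
  by (erule graph_edge) auto

lemma graph_finV: "graph V E \<Longrightarrow> finite V"
  unfolding graph_def by simp

lemma graph_finE: "graph V E \<Longrightarrow> finite E"
proof -
  assume g: "graph V E"
  have "E \<subseteq> Pow V" using graph_edge_sub[OF g] by auto
  moreover have "finite (Pow V)" using g unfolding graph_def by simp
  ultimately show ?thesis by (rule finite_subset)
qed

lemma match_card_Union:
  assumes g: "graph V E" and m: "matching E M"
  shows "card (\<Union>M) = 2 * card M"
proof -
  have ME: "M \<subseteq> E" using m unfolding matching_def by simp
  have fM: "finite M" using graph_finE[OF g] ME by (rule finite_subset[rotated])
  have c2: "\<forall>e\<in>M. card e = 2 \<and> finite e"
  proof
    fix e assume "e \<in> M"
    hence "e \<in> E" using ME by auto
    then obtain u v where "e = {u, v}" "u \<noteq> v" by (rule graph_edge[OF g])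
    thus "card e = 2 \<and> finite e" by simp
  qed
  have pd: "pairwise disjnt M" using m unfolding matching_def pairwise_def disjnt_def by blast
  have "card (\<Union>M) = sum card M" using card_Union_disjoint[OF pd] fM c2 by simp
  also have "\<dots> = sum (\<lambda>_. 2) M" using c2 by (intro sum.cong) auto
  finally show ?thesis by simp
qed

lemma edge_other:
  assumes "graph V E" "f \<in> E" "b \<in> f"
  shows "\<exists>c. f = {b, c} \<and> b \<noteq> c \<and> b \<in> V \<and> c \<in> V"
proof -
  obtain u v where "f = {u, v}" "u \<noteq> v" "u \<in> V" "v \<in> V" using graph_edge[OF assms(1,2)] by metis
  thus ?thesis using assms(3) by auto
qed

lemma matching_insert:
  "matching E M \<Longrightarrow> e \<in> E \<Longrightarrow> \<forall>g\<in>M. e \<inter> g = {} \<Longrightarrow> matching E (insert e M)"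
  unfolding matching_def by blast

lemma match_Union_sub:
  assumes g: "graph V E" and m: "matching E M" shows "\<Union>M \<subseteq> V"
proof
  fix x assume "x \<in> \<Union>M"
  then obtain e where "e \<in> M" "x \<in> e" by blast
  moreover have "e \<in> E" using m \<open>e \<in> M\<close> unfolding matching_def by blast
  ultimately show "x \<in> V" using graph_edge_sub[OF g] by blast
qed

lemma augment:
  assumes g: "graph V E"
  shows "matching E N \<Longrightarrow> matching E M \<Longrightarrow> card M < card N \<Longrightarrow>
    \<exists>M'. matching E M' \<and> card M' = Suc (card M) \<and> \<Union>M \<subseteq> \<Union>M' \<and> M' \<subseteq> M \<union> N"
proof (induction "card N" arbitrary: M N rule: less_induct)
  case less
  have fE: "finite E" using graph_finE[OF g] .
  have fM: "finite M" and fN: "finite N" using less.prems fE unfolding matching_def by (auto intro: finite_subset)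
  have fUM: "finite (\<Union>M)" using match_Union_sub[OF g less.prems(2)] graph_finV[OF g] by (rule finite_subset)
  have "card (\<Union>M) < card (\<Union>N)" using match_card_Union[OF g less.prems(1)] match_card_Union[OF g less.prems(2)] less.prems(3) by simp
  then obtain a where aN: "a \<in> \<Union>N" and aM: "a \<notin> \<Union>M"
    by (metis card_mono fUM not_le subsetI)
  then obtain e where eN: "e \<in> N" and ae: "a \<in> e" by blast
  have eE: "e \<in> E" using eN less.prems(1) unfolding matching_def by blast
  then obtain b where e_eq: "e = {a, b}" and ab: "a \<noteq> b" using edge_other[OF g eE ae] by blast
  have Mdisj: "\<And>f g. f \<in> M \<Longrightarrow> g \<in> M \<Longrightarrow> f \<noteq> g \<Longrightarrow> f \<inter> g = {}" using less.prems(2) unfolding matching_def by blast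
  have Ndisj: "\<And>f g. f \<in> N \<Longrightarrow> g \<in> N \<Longrightarrow> f \<noteq> g \<Longrightarrow> f \<inter> g = {}" using less.prems(1) unfolding matching_def by blast
  have ME: "M \<subseteq> E" using less.prems(2) unfolding matching_def by blast
  have NE: "N \<subseteq> E" using less.prems(1) unfolding matching_def by blast
  show ?case
  proof (cases "b \<in> \<Union>M")
    case False
    let ?M' = "insert e M"
    have "e \<notin> M" using aM ae by blast
    hence "card ?M' = Suc (card M)" using fM by simp
    moreover have "matching E ?M'" 
      by (rule matching_insert[OF less.prems(2) eE]) (use aM False e_eq in blast)
    moreover have "?M' \<subseteq> M \<union> N" using eN by blast
    moreover have "\<Union>M \<subseteq> \<Union>?M'" by blast
    ultimately show ?thesis by (intro exI[where x="?M'"] conjI)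
  next
    case True
    then obtain f where fMm: "f \<in> M" and bf: "b \<in> f" by blast
    have fE': "f \<in> E" using ME fMm by blast
    obtain c where f_eq: "f = {b, c}" and bc: "b \<noteq> c" using edge_other[OF g fE' bf] by blast
    have ca: "c \<noteq> a" using aM fMm f_eq by blast
    define M1 where "M1 = M - {f}"
    define N1 where "N1 = N - {e}"
    have cN1: "card N1 < card N" unfolding N1_def using card_Diff1_less[OF fN eN] .
    have cM1: "card M1 = card M - 1" unfolding M1_def using fMm fM by simp
    have cN1': "card N1 = card N - 1" unfolding N1_def using eN fN by simp
    have "card M \<ge> 1" using fMm fM by (metis One_nat_def Suc_leI card_gt_0_iff empty_iff)
    hence lt: "card M1 < card N1" using cM1 cN1' less.prems(3) by simp
    have m1: "matching E M1" using less.prems(2) unfolding M1_def matching_def by blast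
    have n1: "matching E N1" using less.prems(1) unfolding N1_def matching_def by blast
    obtain M1' where m1': "matching E M1'" and cm1': "card M1' = Suc (card M1)"
      and u1: "\<Union>M1 \<subseteq> \<Union>M1'" and s1: "M1' \<subseteq> M1 \<union> N1"
      using less.hyps[OF cN1 n1 m1 lt] by blast
    have M1'E: "M1' \<subseteq> E" using m1' unfolding matching_def by blast
    have M1'disj: "\<And>f g. f \<in> M1' \<Longrightarrow> g \<in> M1' \<Longrightarrow> f \<noteq> g \<Longrightarrow> f \<inter> g = {}" using m1' unfolding matching_def by blast
    have avoid: "\<forall>h\<in>M1'. a \<notin> h \<and> b \<notin> h"
    proof
      fix h assume h: "h \<in> M1'"
      show "a \<notin> h \<and> b \<notin> h"
      proof (cases "h \<in> M1")
        case True
        hence "h \<in> M" "h \<noteq> f" unfolding M1_def by auto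
        then have "h \<inter> f = {}" using Mdisj[OF _ fMm] by blast
        then show ?thesis using aM \<open>h \<in> M\<close> bf by blast
      next
        case False
        hence "h \<in> N" "h \<noteq> e" using h s1 unfolding N1_def by auto
        then have "h \<inter> e = {}" using Ndisj[OF _ eN] by blast
        then show ?thesis using e_eq by blast
      qed
    qed
    have cardM: "Suc (card M1) = card M" using cM1 \<open>card M \<ge> 1\<close> by simp
    have UM: "\<Union>M \<subseteq> \<Union>M1 \<union> f" unfolding M1_def by blast
    show ?thesis
    proof (cases "c \<in> \<Union>M1'")
      case True
      let ?M' = "insert e M1'"
      have "e \<notin> M1'" using avoid ae by blast
      moreover have fin: "finite M1'" using M1'E fE by (meson finite_subset)
      ultimately have "card ?M' = Suc (card M)" using cm1' cardM by simp
      moreover have "matching E ?M'" 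
        by (rule matching_insert[OF m1' eE]) (use avoid e_eq in auto)
      moreover have "\<Union>M \<subseteq> \<Union>?M'"
      proof
        fix x assume "x \<in> \<Union>M"
        hence "x \<in> \<Union>M1 \<or> x = b \<or> x = c" using UM f_eq by blast
        thus "x \<in> \<Union>?M'" using u1 True e_eq by auto
      qed
      moreover have "?M' \<subseteq> M \<union> N" using s1 eN unfolding M1_def N1_def by blast
      ultimately show ?thesis by (intro exI[where x="?M'"] conjI)
    next
      case False
      let ?M' = "insert f M1'"
      have "f \<notin> M1'" using False f_eq by blast
      moreover have fin: "finite M1'" using M1'E fE by (meson finite_subset)
      ultimately have "card ?M' = Suc (card M)" using cm1' cardM by simp
      moreover have "matching E ?M'" 
        by (rule matching_insert[OF m1' fE']) (use avoid False f_eq in auto)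
      moreover have "\<Union>M \<subseteq> \<Union>?M'" using UM u1 by blast
      moreover have "?M' \<subseteq> M \<union> N" using s1 fMm unfolding M1_def N1_def by blast
      ultimately show ?thesis by (intro exI[where x="?M'"] conjI)
    qed
  qed
qed

lemma iterate:
  assumes g: "graph V E" and mP: "matching E P" and mM: "matching E M"
  shows "card M \<le> k \<Longrightarrow> k \<le> card P \<Longrightarrow> \<exists>M'. matching E M' \<and> card M' = k \<and> \<Union>M \<subseteq> \<Union>M'"
proof (induction k)
  case 0
  then show ?case using mM by (intro exI[of _ M]) auto
next
  case (Suc k)
  show ?case
  proof (cases "card M = Suc k")
    case True
    then show ?thesis using mM by (intro exI[of _ M]) auto
  next
    case False
    with Suc.prems have h: "card M \<le> k" "k \<le> card P" by auto
    obtain M'' where m'': "matching E M''" "card M'' = k" "\<Union>M \<subseteq> \<Union>M''"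
      using Suc.IH[OF h] by blast
    have "card M'' < card P" using Suc.prems m''(2) by simp
    then obtain M' where "matching E M'" "card M' = Suc (card M'')" "\<Union>M'' \<subseteq> \<Union>M'"
      using augment[OF g mP m''(1)] by blast
    then show ?thesis using m'' by (intro exI[of _ M']) auto
  qed
qed

lemma extend_max:
  assumes g: "graph V E" and mN: "matching E N"
  shows "\<exists>M. maximal_matching E M \<and> card N \<le> card M"
proof -
  have fE: "finite E" using graph_finE[OF g] .
  let ?P = "\<lambda>M. matching E M \<and> N \<subseteq> M"
  have b: "\<forall>y. ?P y \<longrightarrow> card y < Suc (card E)"
  proof (intro allI impI)
    fix y assume "?P y"
    hence "y \<subseteq> E" unfolding matching_def by simp
    thus "card y < Suc (card E)" using card_mono[OF fE] by (simp add: le_imp_less_Suc)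
  qed
  have "?P N" using mN by simp
  then obtain M where PM: "?P M" and mx: "\<forall>y. ?P y \<longrightarrow> card y \<le> card M"
    using Lattices_Big.ex_has_greatest_nat[of ?P N card "Suc (card E)"] b by blast
  have fin: "\<And>y. matching E y \<Longrightarrow> finite y"
    unfolding matching_def using fE finite_subset by blast
  have "maximal_matching E M" unfolding maximal_matching_def
  proof (intro conjI allI impI)
    show "matching E M" using PM by simp
    fix M' assume h: "matching E M' \<and> M \<subseteq> M'"
    hence "card M' \<le> card M" using mx PM by auto
    moreover have "finite M'" using h fin by auto
    ultimately show "M' = M" using h card_seteq by blast
  qed
  moreover have "card N \<le> card M" using PM fin by (intro card_mono) auto
  ultimately show ?thesis by blast
qed

lemma uncovered_indep:
  assumes mm: "maximal_matching E M" and u: "u \<notin> \<Union>M" and v: "v \<notin> \<Union>M"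
  shows "{u, v} \<notin> E"
proof
  assume e: "{u, v} \<in> E"
  have m: "matching E M" using mm unfolding maximal_matching_def by simp
  have "\<forall>g\<in>M. {u, v} \<inter> g = {}" using u v by blast
  hence "matching E (insert {u, v} M)" by (rule matching_insert[OF m e])
  hence "insert {u, v} M = M" using mm unfolding maximal_matching_def by blast
  hence "{u, v} \<in> M" by blast
  thus False using u by blast
qed


lemma key:
  assumes g: "graph V E" and fc: "factor_critical V E"
    and mA: "maximal_matching E A" and mB: "maximal_matching E B" and lt: "card A < card B"
  shows "\<exists>I. independent_set V E I \<and> card I = 3 \<and>
           has_perfect_matching (V - I) (induced_edges E (V - I))"
proof -
  have mA': "matching E A" using mA unfolding maximal_matching_def by simp
  have mB': "matching E B" using mB unfolding maximal_matching_def by simp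
  have finV: "finite V" using graph_finV[OF g] .
  have "B \<noteq> {}" using lt by auto
  then obtain e where eB: "e \<in> B" by blast
  have eE: "e \<in> E" using mB' eB unfolding matching_def by blast
  obtain x y where "e = {x, y}" "x \<in> V" by (rule graph_edge[OF g eE])
  hence xV: "x \<in> V" by simp
  obtain P where Pi: "matching (induced_edges E (V - {x})) P" and uP: "\<Union>P = V - {x}"
    using fc xV unfolding factor_critical_def has_perfect_matching_def perfect_matching_def by blast
  have mP: "matching E P" using Pi unfolding matching_def induced_edges_def by blast
  have cP: "2 * card P = card V - 1" using match_card_Union[OF g mP] uP xV finV by simp
  have cV: "card V \<ge> 1" using xV finV by (metis One_nat_def Suc_leI card_gt_0_iff empty_iff)
  have cA: "2 * card A \<le> card V" using match_card_Union[OF g mA'] match_Union_sub[OF g mA'] finV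
    by (metis card_mono)
  have cB: "2 * card B \<le> card V" using match_card_Union[OF g mB'] match_Union_sub[OF g mB'] finV
    by (metis card_mono)
  define k where "k = card P - 1"
  have k1: "card A \<le> k" "k \<le> card P" "1 \<le> card P" using cP cA cB lt cV unfolding k_def by linarith+
  obtain M where mM: "matching E M" and cM: "card M = k" and uAM: "\<Union>A \<subseteq> \<Union>M"
    using iterate[OF g mP mA' k1(1,2)] by blast
  have uMV: "\<Union>M \<subseteq> V" using match_Union_sub[OF g mM] .
  define I where "I = V - \<Union>M"
  have cUM: "card (\<Union>M) = 2 * k" using match_card_Union[OF g mM] cM by simp
  have "card I = card V - card (\<Union>M)" unfolding I_def using uMV finV
    by (meson card_Diff_subset finite_subset)
  hence cI: "card I = 3" using cUM cP k1 unfolding k_def by linarith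
  have indI: "independent_set V E I" unfolding independent_set_def
  proof (intro conjI ballI)
    show "I \<subseteq> V" unfolding I_def by blast
    fix u v assume "u \<in> I" "v \<in> I"
    hence "u \<notin> \<Union>A" "v \<notin> \<Union>A" using uAM unfolding I_def by blast+
    thus "{u, v} \<notin> E" by (rule uncovered_indep[OF mA])
  qed
  have VI: "V - I = \<Union>M" unfolding I_def using uMV by blast
  have "perfect_matching (V - I) (induced_edges E (V - I)) M"
    unfolding perfect_matching_def VI
  proof
    show "\<Union>M = \<Union>M" ..
    show "matching (induced_edges E (\<Union>M)) M"
      using mM unfolding matching_def induced_edges_def by blast
  qed
  hence "has_perfect_matching (V - I) (induced_edges E (V - I))"
    unfolding has_perfect_matching_def by blast
  thus ?thesis using indI cI by blast
qed

theorem lemma3p1: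
  fixes V :: "'a set" and E :: "'a set set"
  assumes "graph V E"
    and "factor_critical V E"
  shows "equimatchable E \<longleftrightarrow>
    \<not> (\<exists>I. independent_set V E I \<and> card I = 3 \<and>
           has_perfect_matching (V - I) (induced_edges E (V - I)))"
proof
  have g: "graph V E" by fact
  have finV: "finite V" using graph_finV[OF g] .
  assume eq: "equimatchable E"
  show "\<not> (\<exists>I. independent_set V E I \<and> card I = 3 \<and>
           has_perfect_matching (V - I) (induced_edges E (V - I)))"
  proof
    assume "\<exists>I. independent_set V E I \<and> card I = 3 \<and>
           has_perfect_matching (V - I) (induced_edges E (V - I))"
    then obtain I where ind: "independent_set V E I" and c3: "card I = 3"
      and hp: "has_perfect_matching (V - I) (induced_edges E (V - I))" by blast
    obtain M0 where m0i: "matching (induced_edges E (V - I)) M0" and u0: "\<Union>M0 = V - I"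
      using hp unfolding has_perfect_matching_def perfect_matching_def by blast
    have m0: "matching E M0" using m0i unfolding matching_def induced_edges_def by blast
    have IV: "I \<subseteq> V" using ind unfolding independent_set_def by simp
    have max0: "maximal_matching E M0" unfolding maximal_matching_def
    proof (intro conjI allI impI)
      show "matching E M0" by fact
      fix M' assume h: "matching E M' \<and> M0 \<subseteq> M'"
      show "M' = M0"
      proof (rule ccontr)
        assume "M' \<noteq> M0"
        then obtain e where eM': "e \<in> M'" and eM0: "e \<notin> M0" using h by blast
        have eE: "e \<in> E" using h eM' unfolding matching_def by blast
        obtain x y where exy: "e = {x, y}" "x \<noteq> y" "x \<in> V" "y \<in> V"
          by (rule graph_edge[OF g eE])
        have dis: "\<forall>g\<in>M0. e \<inter> g = {}"
        proof
          fix f assume "f \<in> M0"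
          hence "f \<in> M'" "f \<noteq> e" using h eM0 by auto
          thus "e \<inter> f = {}" using h eM' unfolding matching_def by blast
        qed
        have "x \<notin> \<Union>M0" "y \<notin> \<Union>M0" using dis exy by auto
        hence "x \<in> I" "y \<in> I" using u0 exy by auto
        thus False using ind eE exy unfolding independent_set_def by blast
      qed
    qed
    have "I \<noteq> {}" using c3 by auto
    then obtain v where vI: "v \<in> I" by blast
    hence vV: "v \<in> V" using IV by blast
    obtain P where Pi: "matching (induced_edges E (V - {v})) P" and uP: "\<Union>P = V - {v}"
      using assms(2) vV unfolding factor_critical_def has_perfect_matching_def perfect_matching_def by blast
    have mP: "matching E P" using Pi unfolding matching_def induced_edges_def by blast
    have cP: "2 * card P = card V - 1" using match_card_Union[OF g mP] uP vV finV by simp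
    have "card (V - I) = card V - 3" using card_Diff_subset[OF finite_subset[OF IV finV] IV] c3 by simp
    hence cM0: "2 * card M0 = card V - 3" using match_card_Union[OF g m0] u0 by simp
    have "card I \<le> card V" using card_mono[OF finV IV] .
    hence c3V: "card V \<ge> 3" using c3 by simp
    obtain Q where mQ: "maximal_matching E Q" and cQ: "card P \<le> card Q"
      using extend_max[OF g mP] by blast
    have "card Q = card M0" using eq mQ max0 unfolding equimatchable_def by blast
    thus False using cQ cP cM0 c3V by linarith
  qed
next
  assume no: "\<not> (\<exists>I. independent_set V E I \<and> card I = 3 \<and>
           has_perfect_matching (V - I) (induced_edges E (V - I)))"
  show "equimatchable E" unfolding equimatchable_def
  proof (intro allI impI)
    fix M1 M2 assume h: "maximal_matching E M1 \<and> maximal_matching E M2"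
    show "card M1 = card M2"
    proof (rule linorder_cases[of "card M1" "card M2"])
      assume l: "card M1 < card M2"
      show ?thesis using key[OF assms _ _ l] h no by blast
    next
      assume l: "card M2 < card M1"
      show ?thesis using key[OF assms _ _ l] h no by blast
    qed
  qed
qed

end
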